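(* Let $n\in\mathbb N$. The eigenvalues of $n(\mathfrak P^{(n)}_3+\mathfrak P^{(n)}_4)$ are exactly $0,2,4,\dots,2n-2$ if $n$ is odd, and exactly $1,3,5,\dots,2n-1$ if $n$ is even; in particular, all $n$ eigenvalues are simple.
   Context: For $n\in\mathbb N$, $\mathfrak P^{(n)}_1,\dots,\mathfrak P^{(n)}_4\in M_n(\mathbb R)$ denote orthogonal projections (real symmetric idempotent matrices) such that (i) $\mathfrak P^{(n)}_1+\dots+\mathfrak P^{(n)}_4=(2-\frac1n)I_n$; (ii) $\operatorname{rk}\mathfrak P^{(n)}_1=\lfloor\frac n2\rfloor-(-1)^n$ and $\operatorname{rk}\mathfrak P^{(n)}_i=\lfloor\frac n2\rfloor$ for $i=2,3,4$; (iii) the only subspaces of $\mathbb C^n$ invariant under all four matrices are $0$ and $\mathbb C^n$. Such quadruples exist for every $n$, and any two of them are simultaneously unitarily equivalent; moreover, any quadruple of orthogonal projections on a Hilbert space summing to $(2-\frac1n)I$ with no nontrivial common invariant closed subspace is unitarily equivalent to one of the four cyclic shifts $(\mathfrak P^{(n)}_{\sigma(1)},\dots,\mathfrak P^{(n)}_{\sigma(4)})$, $\sigma$ a power of the cycle $(1\,2\,3\,4)$, and these four are pairwise inequivalent. *)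

theory Defs
  imports "HOL-Analysis.Analysis"
begin

definition orth_proj :: "real^'n^'n \<Rightarrow> bool" where
  "orth_proj P \<longleftrightarrow> transpose P = P \<and> P ** P = P"

text \<open>The only (complex-linear) subspaces of C^n invariant under all matrices
  of the family are 0 and C^n.\<close>
definition irreducible_family :: "(real^'n^'n) set \<Rightarrow> bool" where
  "irreducible_family Ps \<longleftrightarrow>
     (\<forall>V :: (complex^'n) set.
        vec.subspace V \<and> (\<forall>P\<in>Ps. \<forall>v\<in>V. map_matrix complex_of_real P *v v \<in> V)
        \<longrightarrow> V = {0} \<or> V = UNIV)"

definition is_eigenvalue :: "real^'n^'n \<Rightarrow> real \<Rightarrow> bool" where
  "is_eigenvalue A c \<longleftrightarrow> (\<exists>v. v \<noteq> 0 \<and> A *v v = c *s v)"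

end

theory Submission
  imports Defs
begin

lemma sym_inner:
  fixes S :: "real^'n^'n"
  assumes "transpose S = S"
  shows "inner (S *v u) w = inner u (S *v w)"
proof -
  have "S *v u = u v* S" by (metis assms transpose_matrix_vector)
  thus ?thesis by (simp add: dot_lmul_matrix)
qed

lemma proj_idem:
  fixes P :: "real^'n^'n"
  assumes "orth_proj P" shows "P *v (P *v u) = P *v u"
  using assms unfolding orth_proj_def by (simp add: matrix_vector_mul_assoc)

lemma proj_sym:
  fixes P :: "real^'n^'n"
  assumes "orth_proj P" shows "inner (P *v u) w = inner u (P *v w)"
  using assms unfolding orth_proj_def by (intro sym_inner) simp

lemma refl_pair:
  fixes P Q :: "real^'n^'n"
  assumes P: "orth_proj P" and Q: "orth_proj Q"
    and eig: "(P + Q) *v u = \<mu> *\<^sub>R u"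
  shows "(P + Q) *v ((P - Q) *v u) = (2 - \<mu>) *\<^sub>R ((P - Q) *v u)"
    and "inner ((P - Q) *v u) ((P - Q) *v u) = \<mu> * (2 - \<mu>) * inner u u"
proof -
  define p where "p = P *v u"
  define q where "q = Q *v u"
  have s: "p + q = \<mu> *\<^sub>R u" using eig by (simp add: p_def q_def matrix_vector_mult_add_rdistrib)
  have "P *v (p + q) = P *v (\<mu> *\<^sub>R u)" by (simp only: s)
  hence "P *v (p + q) = \<mu> *\<^sub>R p" by (simp add: p_def matrix_vector_mult_scaleR)
  hence Pq: "P *v q = (\<mu> - 1) *\<^sub>R p"
    by (simp add: matrix_vector_right_distrib p_def proj_idem[OF P] algebra_simps)
  have "Q *v (p + q) = Q *v (\<mu> *\<^sub>R u)" by (simp only: s)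
  hence "Q *v (p + q) = \<mu> *\<^sub>R q" by (simp add: q_def matrix_vector_mult_scaleR)
  hence Qp: "Q *v p = (\<mu> - 1) *\<^sub>R q"
    by (simp add: matrix_vector_right_distrib q_def proj_idem[OF Q] algebra_simps)
  have Pp: "P *v p = p" by (simp add: p_def proj_idem[OF P])
  have Qq: "Q *v q = q" by (simp add: q_def proj_idem[OF Q])
  have D: "(P - Q) *v u = p - q" by (simp add: p_def q_def matrix_vector_mult_diff_rdistrib)
  have "(P + Q) *v (p - q) = (P *v p - P *v q) + (Q *v p - Q *v q)"
    by (simp add: matrix_vector_mult_add_rdistrib matrix_vector_mult_diff_distrib)
  also have "\<dots> = (p - (\<mu> - 1) *\<^sub>R p) + ((\<mu> - 1) *\<^sub>R q - q)" by (simp only: Pq Qp Pp Qq)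
  also have "\<dots> = (2 - \<mu>) *\<^sub>R (p - q)"
  proof -
    have e: "(1 - (\<mu> - 1)) *\<^sub>R z = z - (\<mu> - 1) *\<^sub>R z" for z :: "real^'n"
      by (simp only: scaleR_diff_left scaleR_one)
    have "(2 - \<mu>) *\<^sub>R (p - q) = (1 - (\<mu> - 1)) *\<^sub>R p - (1 - (\<mu> - 1)) *\<^sub>R q"
      by (simp only: scaleR_diff_right) simp
    also have "\<dots> = (p - (\<mu> - 1) *\<^sub>R p) + ((\<mu> - 1) *\<^sub>R q - q)"
      by (simp only: e) (simp only: diff_diff_eq2 diff_add_eq add_diff_eq diff_diff_eq)
    finally show ?thesis by simp
  qed
  finally show "(P + Q) *v ((P - Q) *v u) = (2 - \<mu>) *\<^sub>R ((P - Q) *v u)" unfolding D .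
  have pp: "inner p p = inner u p"
  proof -
    have "inner p p = inner (P *v u) (P *v u)" by (simp add: p_def)
    also have "\<dots> = inner u (P *v (P *v u))" by (rule proj_sym[OF P])
    finally show ?thesis by (simp add: proj_idem[OF P] p_def)
  qed
  have qq: "inner q q = inner u q"
  proof -
    have "inner q q = inner (Q *v u) (Q *v u)" by (simp add: q_def)
    also have "\<dots> = inner u (Q *v (Q *v u))" by (rule proj_sym[OF Q])
    finally show ?thesis by (simp add: proj_idem[OF Q] q_def)
  qed
  have pq1: "inner p q = (\<mu> - 1) * inner u p"
  proof -
    have "inner p q = inner (P *v u) q" by (simp add: p_def)
    also have "\<dots> = inner u (P *v q)" by (rule proj_sym[OF P])
    also have "\<dots> = (\<mu> - 1) * inner u p" by (simp add: Pq)
    finally show ?thesis .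
  qed
  have pq2: "inner q p = (\<mu> - 1) * inner u q"
  proof -
    have "inner q p = inner (Q *v u) p" by (simp add: q_def)
    also have "\<dots> = inner u (Q *v p)" by (rule proj_sym[OF Q])
    also have "\<dots> = (\<mu> - 1) * inner u q" by (simp add: Qp)
    finally show ?thesis .
  qed
  have qp: "inner q p = inner p q" by (rule inner_commute)
  have su: "inner u p + inner u q = \<mu> * inner u u"
  proof -
    have "inner u p + inner u q = inner u (p + q)" by (simp only: inner_add_right)
    also have "\<dots> = \<mu> * inner u u" by (simp only: s inner_scaleR_right)
    finally show ?thesis .
  qed
  have pq: "2 * inner p q = (\<mu> - 1) * (inner u p + inner u q)"
    using pq1 pq2 qp by (simp add: distrib_left)
  have "inner (p - q) (p - q) = inner p p + inner q q - 2 * inner p q"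
    by (simp add: inner_diff_left inner_diff_right qp)
  also have "\<dots> = (inner u p + inner u q) - (\<mu> - 1) * (inner u p + inner u q)"
    using pp qq pq by linarith
  also have "\<dots> = \<mu> * (2 - \<mu>) * inner u u"
    unfolding su by (simp add: algebra_simps)
  finally show "inner ((P - Q) *v u) ((P - Q) *v u) = \<mu> * (2 - \<mu>) * inner u u" by (simp only: D)
qed

lemma sym_eigvec:
  fixes S :: "real^'n^'n"
  assumes sym: "transpose S = S"
  shows "\<exists>v \<mu>. v \<noteq> 0 \<and> S *v v = \<mu> *\<^sub>R v"
proof -
  define f where "f u = inner u (S *v u)" for u :: "real^'n"
  have cont: "continuous_on (sphere 0 1) f"
    unfolding f_def by (intro continuous_intros)
  have ne: "sphere (0::real^'n) 1 \<noteq> {}"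
    by (metis norm_Basis SOME_Basis empty_iff mem_sphere_0)
  obtain v where v: "v \<in> sphere 0 1" and vmax: "\<And>y. y \<in> sphere 0 1 \<Longrightarrow> f y \<le> f v"
    using continuous_attains_sup[OF compact_sphere ne cont] by blast
  define l where "l = f v"
  have nv: "inner v v = 1" using v by (simp add: dot_square_norm)
  have fs: "f (a *\<^sub>R z) = a * a * f z" for a z
    by (simp add: f_def matrix_vector_mult_scaleR)
  have bound: "f z \<le> l * inner z z" for z
  proof (cases "z = 0")
    case True thus ?thesis by (simp add: f_def)
  next
    case False
    hence nz: "norm z > 0" by simp
    have "(1 / norm z) *\<^sub>R z \<in> sphere 0 1" using nz by simp
    hence "f ((1 / norm z) *\<^sub>R z) \<le> l" using vmax l_def by blast
    hence "f z / (norm z * norm z) \<le> l" by (simp add: fs)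
    hence "f z \<le> l * (norm z * norm z)" using nz by (simp add: divide_le_eq)
    thus ?thesis by (simp add: dot_square_norm power2_eq_square)
  qed
  define w where "w = S *v v - l *\<^sub>R v"
  define c where "c = inner w w"
  define d where "d = f w - l * inner w w"
  have symi: "inner (S *v a) b = inner a (S *v b)" for a b using sym_inner[OF sym] .
  have key: "2 * t * c + t * t * d \<le> 0" for t
  proof -
    have e1: "f (v + t *\<^sub>R w) = f v + 2 * t * inner w (S *v v) + t * t * f w"
      unfolding f_def using symi[of v w]
      by (simp add: matrix_vector_right_distrib matrix_vector_mult_scaleR inner_add_left inner_add_right inner_commute algebra_simps)
    have e2: "inner (v + t *\<^sub>R w) (v + t *\<^sub>R w) = 1 + 2 * t * inner v w + t * t * inner w w"
      using nv by (simp add: inner_add_left inner_add_right inner_commute algebra_simps)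
    have e3: "inner w (S *v v) - l * inner v w = c"
      unfolding c_def w_def by (simp add: inner_diff_left inner_diff_right inner_commute l_def f_def algebra_simps)
    have "f (v + t *\<^sub>R w) \<le> l * inner (v + t *\<^sub>R w) (v + t *\<^sub>R w)" by (rule bound)
    hence "f v + 2 * t * inner w (S *v v) + t * t * f w \<le> l * (1 + 2 * t * inner v w + t * t * inner w w)"
      using e1 e2 by simp
    thus ?thesis using e3 unfolding d_def l_def by (simp add: algebra_simps)
  qed
  have "c = 0"
  proof (rule ccontr)
    assume "c \<noteq> 0"
    hence cp: "c > 0" unfolding c_def by (simp add: inner_gt_zero_iff)
    define t where "t = c / (\<bar>d\<bar> + 1)"
    have tp: "t > 0" using cp by (simp add: t_def)
    have "t * \<bar>d\<bar> \<le> c" using cp unfolding t_def by (simp add: field_simps)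
    hence "t * (t * \<bar>d\<bar>) \<le> t * c" using tp by (simp add: mult_left_mono)
    moreover have "- (t * t * \<bar>d\<bar>) \<le> t * t * d" using tp
      by (smt (verit) abs_ge_minus_self mult_minus_right mult_pos_pos mult_left_mono)
    ultimately have "t * c \<le> 2 * t * c + t * t * d" by (simp add: algebra_simps)
    moreover have "t * c > 0" using tp cp by simp
    ultimately show False using key[of t] by linarith
  qed
  hence "w = 0" unfolding c_def by simp
  hence "S *v v = l *\<^sub>R v" unfolding w_def by simp
  moreover have "v \<noteq> 0" using v by auto
  ultimately show ?thesis by blast
qed

lemma mv_sum: "(M::real^'n^'m) *v sum g A = (\<Sum>j\<in>A. M *v g j)"
  by (induct A rule: infinite_finite_induct) (simp_all add: matrix_vector_right_distrib)

lemma diag_lemma: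
  fixes M :: "real^'n^'n" and f :: "'n \<Rightarrow> real^'n" and d :: "'n \<Rightarrow> real"
  assumes eig: "\<And>j. M *v f j = d j *\<^sub>R f j" and nz: "\<And>j. f j \<noteq> 0"
    and orth: "\<And>i j. i \<noteq> j \<Longrightarrow> inner (f i) (f j) = 0"
  shows "trace M = sum d UNIV" and "det (x *\<^sub>R mat 1 - M) = (\<Prod>j\<in>UNIV. x - d j)"
proof -
  define Q :: "real^'n^'n" where "Q = (\<chi> i j. f j $ i)"
  have Qv: "Q *v c = (\<Sum>j\<in>UNIV. c$j *\<^sub>R f j)" for c
    by (simp add: vec_eq_iff Q_def matrix_vector_mult_def sum_component mult.commute)
  have inj0: "c = 0" if "Q *v c = 0" for c
  proof -
    have "c $ k = 0" for k
    proof -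
      have "0 = inner (f k) (Q *v c)" using that by simp
      also have "\<dots> = (\<Sum>j\<in>UNIV. c$j * inner (f k) (f j))" by (simp add: Qv inner_sum_right)
      also have "\<dots> = (\<Sum>j\<in>UNIV. if j = k then c$k * inner (f k) (f k) else 0)"
        by (rule sum.cong) (auto simp: orth)
      also have "\<dots> = c$k * inner (f k) (f k)" by simp
      finally show ?thesis using nz[of k] by simp
    qed
    thus ?thesis by (simp add: vec_eq_iff)
  qed
  have "inj ((*v) Q)"
    by (rule injI) (metis inj0 eq_iff_diff_eq_0 matrix_vector_mult_diff_distrib)
  hence "det Q \<noteq> 0" using det_nz_iff_inj[of "(*v) Q"] by simp
  hence invQ: "invertible Q" by (simp add: invertible_det_nz)
  then obtain Qi where Qi1: "Q ** Qi = mat 1" and Qi2: "Qi ** Q = mat 1"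
    unfolding invertible_def by blast
  define D :: "real^'n^'n" where "D = (\<chi> i j. if i = j then d i else 0)"
  have Dv: "D *v c = (\<chi> j. d j * c$j)" for c
    by (simp add: vec_eq_iff D_def matrix_vector_mult_def if_distrib[of "\<lambda>u. u * _"] cong: if_cong)
  have MQ: "M ** Q = Q ** D"
  proof -
    have "(M ** Q) *v c = (Q ** D) *v c" for c
      by (simp add: matrix_vector_mul_assoc[symmetric] Qv Dv mv_sum matrix_vector_mult_scaleR eig mult.commute)
    thus ?thesis by (simp add: matrix_eq)
  qed
  have "M = M ** (Q ** Qi)" by (simp add: Qi1)
  also have "\<dots> = (M ** Q) ** Qi" by (rule matrix_mul_assoc)
  finally have "M = (Q ** D) ** Qi" by (simp only: MQ)
  hence "trace M = trace ((Q ** D) ** Qi)" by simp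
  also have "\<dots> = trace (Qi ** (Q ** D))" by (rule trace_mul_sym)
  also have "\<dots> = trace D" by (simp add: matrix_mul_assoc Qi2)
  also have "\<dots> = sum d UNIV" by (simp add: trace_def D_def)
  finally show "trace M = sum d UNIV" .
  define E :: "real^'n^'n" where "E = (\<chi> i j. if i = j then x - d i else 0)"
  have Ev: "E *v c = (\<chi> j. (x - d j) * c$j)" for c
    by (simp add: vec_eq_iff E_def matrix_vector_mult_def if_distrib[of "\<lambda>u. u * _"] cong: if_cong)
  have NQ: "(x *\<^sub>R mat 1 - M) ** Q = Q ** E"
  proof -
    have "((x *\<^sub>R mat 1 - M) ** Q) *v c = (Q ** E) *v c" for c
      by (simp add: matrix_vector_mul_assoc[symmetric] Qv Ev mv_sum
          matrix_vector_mult_scaleR eig matrix_vector_mult_diff_rdistrib scaleR_matrix_vector_assoc[symmetric]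
          sum_subtractf scaleR_right.sum algebra_simps)
    thus ?thesis by (simp add: matrix_eq)
  qed
  have "det (x *\<^sub>R mat 1 - M) * det Q = det Q * det E"
  proof -
    have "det (x *\<^sub>R mat 1 - M) * det Q = det ((x *\<^sub>R mat 1 - M) ** Q)" by (simp only: det_mul)
    also have "\<dots> = det (Q ** E)" by (simp only: NQ)
    also have "\<dots> = det Q * det E" by (rule det_mul)
    finally show ?thesis .
  qed
  hence "det (x *\<^sub>R mat 1 - M) = det E" using \<open>det Q \<noteq> 0\<close> by simp
  also have "\<dots> = (\<Prod>j\<in>UNIV. x - d j)"
    by (subst det_diagonal) (auto simp: E_def)
  finally show "det (x *\<^sub>R mat 1 - M) = (\<Prod>j\<in>UNIV. x - d j)" .
qed

lemma orthonormal_expand: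
  fixes U :: "(real^'n) set"
  assumes fin: "finite U" and orth: "pairwise orthogonal U" and un: "\<And>u. u \<in> U \<Longrightarrow> norm u = 1"
    and x: "x \<in> span U"
  shows "x = (\<Sum>u\<in>U. inner u x *\<^sub>R u)"
proof -
  obtain c where xc: "x = (\<Sum>v\<in>U. c v *\<^sub>R v)" using x span_finite[OF fin] by blast
  have "inner u x = c u" if "u \<in> U" for u
  proof -
    have "inner u x = (\<Sum>v\<in>U. c v * inner u v)" by (simp add: xc inner_sum_right)
    also have "\<dots> = (\<Sum>v\<in>U. if v = u then c u else 0)"
    proof (rule sum.cong)
      fix v assume v: "v \<in> U"
      show "c v * inner u v = (if v = u then c u else 0)"
      proof (cases "v = u")
        case True
        then show ?thesis using un[OF that] by (simp add: dot_square_norm)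
      next
        case False
        then show ?thesis using orth v that by (simp add: pairwise_def orthogonal_def)
      qed
    qed simp
    also have "\<dots> = c u" using that fin by simp
    finally show ?thesis .
  qed
  thus ?thesis using xc by (metis (no_types, lifting) sum.cong)
qed

lemma trace_proj:
  fixes P :: "real^'n^'n"
  assumes P: "orth_proj P"
  shows "trace P = real (rank P)"
proof -
  define S where "S = range (\<lambda>x. P *v x)"
  have subS: "subspace S" unfolding S_def
    by (rule linear_subspace_image) (auto simp: subspace_UNIV)
  obtain U where US: "U \<subseteq> S" and orth: "pairwise orthogonal U" and un: "\<And>x. x \<in> U \<Longrightarrow> norm x = 1"
    and ind: "independent U" and cardU: "card U = dim S" and spU: "span U = S"
    using orthonormal_basis_subspace[OF subS] by metis
  have fin: "finite U" using ind by (rule independent_imp_finite)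
  have Pu: "P *v u = u" if "u \<in> U" for u
    using US that unfolding S_def by (auto simp: proj_idem[OF P])
  have Pz: "P *v z = (\<Sum>u\<in>U. inner u z *\<^sub>R u)" for z
  proof -
    have "P *v z \<in> span U" using spU S_def by auto
    hence "P *v z = (\<Sum>u\<in>U. inner u (P *v z) *\<^sub>R u)" using orthonormal_expand[OF fin orth, of "P *v z"] un by blast
    also have "\<dots> = (\<Sum>u\<in>U. inner u z *\<^sub>R u)"
      by (rule sum.cong) (auto simp: proj_sym[OF P, symmetric] Pu)
    finally show ?thesis .
  qed
  have Pii: "P $ i $ i = (\<Sum>u\<in>U. u$i * u$i)" for i
  proof -
    have "P $ i $ i = (P *v axis i 1) $ i"
      by (simp add: matrix_vector_mult_def axis_def if_distrib[of "\<lambda>u. _ * u"] cong: if_cong)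
    also have "\<dots> = (\<Sum>u\<in>U. u$i * u$i)" by (simp add: Pz inner_axis)
    finally show ?thesis .
  qed
  have "trace P = (\<Sum>i\<in>UNIV. \<Sum>u\<in>U. u$i * u$i)" by (simp add: trace_def Pii)
  also have "\<dots> = (\<Sum>u\<in>U. \<Sum>i\<in>UNIV. u$i * u$i)" by (rule sum.swap)
  also have "\<dots> = (\<Sum>u\<in>U. inner u u)" by (simp add: inner_vec_def)
  also have "\<dots> = (\<Sum>u\<in>U. 1)" by (rule sum.cong) (auto simp: un dot_square_norm)
  also have "\<dots> = real (card U)" by simp
  finally show ?thesis using cardU rank_dim_range[of P] S_def by simp
qed

lemma det_zero_iff_eig:
  fixes M :: "real^'n^'n"
  shows "det (c *\<^sub>R mat 1 - M) = 0 \<longleftrightarrow> is_eigenvalue M c"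
proof -
  let ?N = "c *\<^sub>R mat 1 - M"
  have "det ?N \<noteq> 0 \<longleftrightarrow> inj ((*v) ?N)" using det_nz_iff_inj[of "(*v) ?N"] by simp
  also have "\<dots> \<longleftrightarrow> (\<forall>v. ?N *v v = 0 \<longrightarrow> v = 0)"
  proof
    assume "inj ((*v) ?N)" thus "\<forall>v. ?N *v v = 0 \<longrightarrow> v = 0"
      by (metis injD matrix_vector_mult_0_right)
  next
    assume h: "\<forall>v. ?N *v v = 0 \<longrightarrow> v = 0"
    show "inj ((*v) ?N)"
      by (rule injI) (metis h eq_iff_diff_eq_0 matrix_vector_mult_diff_distrib)
  qed
  also have "\<dots> \<longleftrightarrow> \<not> is_eigenvalue M c"
  proof -
    have Nv: "?N *v v = 0 \<longleftrightarrow> M *v v = c *s v" for v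
    proof -
      have "?N *v v = c *\<^sub>R v - M *v v"
        by (simp add: matrix_vector_mult_diff_rdistrib scaleR_matrix_vector_assoc[symmetric])
      thus ?thesis by (auto simp: scalar_mult_eq_scaleR)
    qed
    show ?thesis unfolding is_eigenvalue_def Nv by blast
  qed
  finally show ?thesis by blast
qed

lemma assemble:
  fixes M :: "real^'n^'n" and u :: "nat \<Rightarrow> real^'n" and lam :: "nat \<Rightarrow> real" and x :: real
  assumes n: "n = CARD('n)" and sym: "transpose M = M"
    and eig: "\<And>k. k < n \<Longrightarrow> u k \<noteq> 0 \<and> M *v u k = lam k *\<^sub>R u k"
    and inj: "inj_on lam {..<n}"
  shows "trace M = (\<Sum>k<n. lam k)"
    and "det (x *\<^sub>R mat 1 - M) = (\<Prod>k<n. x - lam k)"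
    and "{c. is_eigenvalue M c} = lam ` {..<n}"
proof -
  obtain g where g: "bij_betw g (UNIV :: 'n set) {0..<n}"
    using ex_bij_betw_finite_nat[of "UNIV :: 'n set"] n by auto
  have g': "bij_betw g (UNIV :: 'n set) {..<n}" using g by (simp add: atLeast0LessThan)
  have gl: "g j < n" for j using g' bij_betwE by blast
  define f where "f j = u (g j)" for j
  define d where "d j = lam (g j)" for j
  have fe: "M *v f j = d j *\<^sub>R f j" "f j \<noteq> 0" for j using eig[OF gl[of j]] by (auto simp: f_def d_def)
  have orth: "inner (f i) (f j) = 0" if "i \<noteq> j" for i j
  proof -
    have "g i \<noteq> g j" using that g' by (metis bij_betw_imp_inj_on inj_onD UNIV_I)
    hence dd: "d i \<noteq> d j" using inj gl unfolding d_def by (meson inj_onD lessThan_iff)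
    have "d i * inner (f i) (f j) = inner (M *v f i) (f j)" by (simp add: fe)
    also have "\<dots> = inner (f i) (M *v f j)" by (rule sym_inner[OF sym])
    also have "\<dots> = d j * inner (f i) (f j)" by (simp add: fe)
    finally show ?thesis using dd by simp
  qed
  note D = diag_lemma[OF fe(1) fe(2) orth]
  show "trace M = (\<Sum>k<n. lam k)"
    using D(1) sum.reindex_bij_betw[OF g', of lam] by (simp add: d_def)
  have det: "det (y *\<^sub>R mat 1 - M) = (\<Prod>k<n. y - lam k)" for y
    using D(2)[where x=y] prod.reindex_bij_betw[OF g', of "\<lambda>k. y - lam k"] by (simp add: d_def)
  thus "det (x *\<^sub>R mat 1 - M) = (\<Prod>k<n. x - lam k)" .
  show "{c. is_eigenvalue M c} = lam ` {..<n}"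
  proof -
    have "is_eigenvalue M c \<longleftrightarrow> c \<in> lam ` {..<n}" for c
      using det_zero_iff_eig[of c M, symmetric] det[of c] by (auto simp: prod_zero_iff)
    thus ?thesis by auto
  qed
qed

lemma transpose_add_sub:
  fixes P Q :: "real^'n^'n"
  shows "transpose (P + Q) = transpose P + transpose Q" "transpose (P - Q) = transpose P - transpose Q"
  by (simp_all add: transpose_def vec_eq_iff)

lemma nonneg_quad:
  fixes m :: real assumes "0 \<le> m * (2 - m)" shows "0 \<le> m \<and> m \<le> 2"
  using assms by (smt (verit) mult_neg_pos mult_nonneg_nonneg mult_pos_neg)

lemma pos_quad: fixes a :: real shows "0 < a \<Longrightarrow> a < 2 \<Longrightarrow> 0 < (2 - a) * (2 - (2 - a))"
  by simp

lemma spectrum_chains: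
  fixes P1 P2 P3 P4 :: "real^'n^'n" and n :: nat
  assumes proj: "orth_proj P1" "orth_proj P2" "orth_proj P3" "orth_proj P4"
    and sumAB: "(P1 + P2) + (P3 + P4) = (2 - 1 / real n) *\<^sub>R mat 1"
    and n1: "n \<ge> 1"
  shows "(\<exists>u. \<forall>k<n. u k \<noteq> 0 \<and> (P3 + P4) *v u k = (2 * real k / real n) *\<^sub>R u k)
       \<or> (\<exists>u. \<forall>k<n. u k \<noteq> 0 \<and> (P3 + P4) *v u k = (2 - (2 * real k + 1) / real n) *\<^sub>R u k)"
proof -
  define r where "r = real n"
  define c where "c = 2 - 1 / r"
  have r1: "r \<ge> 1" using n1 by (simp add: r_def)
  define B where "B = P3 + P4"
  define A where "A = P1 + P2"
  define X where "X = P1 - P2"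
  define Y where "Y = P3 - P4"
  have Au: "A *v u = c *\<^sub>R u - B *v u" for u
  proof -
    have "(A + B) *v u = c *\<^sub>R u" using sumAB
      by (simp add: A_def B_def c_def r_def scaleR_matrix_vector_assoc[symmetric])
    thus ?thesis by (simp add: matrix_vector_mult_add_rdistrib eq_diff_eq)
  qed
  have Yeig: "B *v (Y *v u) = (2 - m) *\<^sub>R (Y *v u)"
    and Ynorm: "inner (Y *v u) (Y *v u) = m * (2 - m) * inner u u" if "B *v u = m *\<^sub>R u" for u m
    using refl_pair[OF proj(3) proj(4)] that unfolding B_def Y_def by blast+
  have Aeig: "A *v u = (c - m) *\<^sub>R u" if "B *v u = m *\<^sub>R u" for u m
    using that by (simp add: Au scaleR_diff_left)
  have Xeig: "B *v (X *v u) = (2 * c - 2 - m) *\<^sub>R (X *v u)"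
    and Xnorm: "inner (X *v u) (X *v u) = (c - m) * (2 - (c - m)) * inner u u" if "B *v u = m *\<^sub>R u" for u m
  proof -
    note rp = refl_pair[OF proj(1) proj(2), of u "c - m", folded A_def X_def, OF Aeig[OF that]]
    show "inner (X *v u) (X *v u) = (c - m) * (2 - (c - m)) * inner u u" using rp(2) .
    have "B *v (X *v u) = c *\<^sub>R (X *v u) - A *v (X *v u)" by (simp add: Au)
    also have "\<dots> = (c - (2 - (c - m))) *\<^sub>R (X *v u)" by (simp only: rp(1) scaleR_diff_left)
    also have "\<dots> = (2 * c - 2 - m) *\<^sub>R (X *v u)" by (rule arg_cong[where f="\<lambda>a. a *\<^sub>R (X *v u)"]) simp
    finally show "B *v (X *v u) = (2 * c - 2 - m) *\<^sub>R (X *v u)" .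
  qed
  have range: "0 \<le> m \<and> m \<le> 2 \<and> 0 \<le> c - m \<and> c - m \<le> 2" if "u \<noteq> 0" "B *v u = m *\<^sub>R u" for u m
  proof -
    have uu: "inner u u > 0" using that(1) by (simp add: inner_gt_zero_iff)
    have "0 \<le> m * (2 - m) * inner u u" using Ynorm[OF that(2)] by (metis inner_ge_zero)
    hence "0 \<le> m * (2 - m)" using uu by (simp add: zero_le_mult_iff)
    moreover have "0 \<le> (c - m) * (2 - (c - m)) * inner u u" using Xnorm[OF that(2)] by (metis inner_ge_zero)
    hence "0 \<le> (c - m) * (2 - (c - m))" using uu by (simp add: zero_le_mult_iff)
    ultimately show ?thesis using nonneg_quad by blast
  qed
  have symB: "transpose B = B" using proj unfolding B_def orth_proj_def by (simp add: transpose_add_sub)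
  obtain v0 m0 where v0: "v0 \<noteq> 0" "B *v v0 = m0 *\<^sub>R v0" using sym_eigvec[OF symB] by blast
  define R where "R u = Y *v (X *v u)" for u
  define L where "L u = X *v (Y *v u)" for u
  have Reig: "B *v R u = (m + 2 / r) *\<^sub>R R u" if "B *v u = m *\<^sub>R u" for u m
  proof -
    have "2 - (2 * c - 2 - m) = m + 2 / r" by (simp add: c_def)
    thus ?thesis using Yeig[OF Xeig[OF that]] unfolding R_def by simp
  qed
  have Rnorm: "inner (R u) (R u) = (2*c-2-m) * (2 - (2*c-2-m)) * ((c - m) * (2 - (c - m)) * inner u u)"
    if "B *v u = m *\<^sub>R u" for u m
    using Ynorm[OF Xeig[OF that]] Xnorm[OF that] unfolding R_def by simp
  have Leig: "B *v L u = (m - 2 / r) *\<^sub>R L u" if "B *v u = m *\<^sub>R u" for u m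
  proof -
    have "2 * c - 2 - (2 - m) = m - 2 / r" by (simp add: c_def)
    thus ?thesis using Xeig[OF Yeig[OF that]] unfolding L_def by simp
  qed
  have Lnorm: "inner (L u) (L u) = (c - (2 - m)) * (2 - (c - (2 - m))) * (m * (2 - m) * inner u u)"
    if "B *v u = m *\<^sub>R u" for u m
    using Xnorm[OF Yeig[OF that]] Ynorm[OF that] unfolding L_def by simp
  define s where "s k = (R ^^ k) v0" for k
  have s_eig: "B *v s k = (m0 + 2 * real k / r) *\<^sub>R s k" for k
  proof (induction k)
    case 0 then show ?case using v0 by (simp add: s_def)
  next
    case (Suc k)
    have "B *v s (Suc k) = B *v R (s k)" by (simp add: s_def)
    also have "\<dots> = (m0 + 2 * real k / r + 2 / r) *\<^sub>R R (s k)" by (rule Reig[OF Suc])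
    also have "m0 + 2 * real k / r + 2 / r = m0 + 2 * real (Suc k) / r" by (simp add: add_divide_distrib)
    finally show ?case by (simp add: s_def)
  qed
  obtain k where sk: "s k \<noteq> 0" "s (Suc k) = 0"
  proof (rule ccontr)
    assume "\<not> thesis"
    hence h: "s k \<noteq> 0 \<Longrightarrow> s (Suc k) \<noteq> 0" for k using that by blast
    have allnz: "s k \<noteq> 0" for k
      by (induction k) (use v0 h in \<open>auto simp: s_def\<close>)
    have "m0 + 2 * real (Suc n) / r \<le> 2" using range[OF allnz s_eig] by blast
    moreover have "0 \<le> m0" using range[OF v0] by blast
    moreover have "2 * real (Suc n) / r > 2" using r1 by (simp add: r_def field_simps)
    ultimately show False by linarith
  qed
  define v where "v = s k"
  define m where "m = m0 + 2 * real k / r"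
  have v: "v \<noteq> 0" "B *v v = m *\<^sub>R v" "Y *v (X *v v) = 0"
    using sk s_eig by (auto simp: v_def m_def s_def R_def)
  show ?thesis
  proof (cases "X *v v = 0")
    case True
    have "(c - m) * (2 - (c - m)) * inner v v = 0" using Xnorm[OF v(2)] True by simp
    hence "(c - m) * (2 - (c - m)) = 0" using v(1) by simp
    moreover have "m \<ge> 0" using range[OF v(1) v(2)] by blast
    moreover have "c - 2 < 0" using r1 by (simp add: c_def)
    ultimately have mc: "m = c" by auto
    define t where "t j = (L ^^ j) v" for j
    have t_eig: "B *v t j = (c - 2 * real j / r) *\<^sub>R t j" for j
    proof (induction j)
      case 0 then show ?case using v mc by (simp add: t_def)
    next
      case (Suc j)
      have "B *v t (Suc j) = B *v L (t j)" by (simp add: t_def)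
      also have "\<dots> = (c - 2 * real j / r - 2 / r) *\<^sub>R L (t j)" by (rule Leig[OF Suc])
      also have "c - 2 * real j / r - 2 / r = c - 2 * real (Suc j) / r" by (simp add: add_divide_distrib)
      finally show ?case by (simp add: t_def)
    qed
    have t_nz: "t j \<noteq> 0" if "j < n" for j
      using that
    proof (induction j)
      case 0 then show ?case using v by (simp add: t_def)
    next
      case (Suc j)
      hence nz: "t j \<noteq> 0" by simp
      let ?m = "c - 2 * real j / r"
      have jn: "real j + 1 < r" using Suc.prems by (simp add: r_def)
      have f1: "?m * (2 - ?m) > 0"
      proof -
        have "?m = 2 - (2 * real j + 1) / r" using r1 by (simp add: c_def field_simps)
        moreover have "(2 * real j + 1) / r < 2" using jn r1 by (simp add: field_simps)
        moreover have "(2 * real j + 1) / r > 0" using r1 by simp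
        ultimately show ?thesis by (metis pos_quad)
      qed
      have f2: "(c - (2 - ?m)) * (2 - (c - (2 - ?m))) > 0"
      proof -
        have "c - (2 - ?m) = 2 - (2 * real j + 2) / r" using r1 by (simp add: c_def field_simps)
        moreover have "(2 * real j + 2) / r < 2" using jn r1 by (simp add: field_simps)
        moreover have "(2 * real j + 2) / r > 0" using r1 by simp
        ultimately show ?thesis by (metis pos_quad)
      qed
      have "inner (t (Suc j)) (t (Suc j)) = (c - (2 - ?m)) * (2 - (c - (2 - ?m))) * (?m * (2 - ?m) * inner (t j) (t j))"
        using Lnorm[OF t_eig[of j]] by (simp add: t_def)
      moreover have "inner (t j) (t j) > 0" using nz by (simp add: inner_gt_zero_iff)
      ultimately have "inner (t (Suc j)) (t (Suc j)) > 0" using f1 f2 by simp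
      thus ?case by auto
    qed
    have "\<forall>j<n. t j \<noteq> 0 \<and> (P3 + P4) *v t j = (2 - (2 * real j + 1) / real n) *\<^sub>R t j"
    proof (intro allI impI conjI)
      fix j assume "j < n"
      thus "t j \<noteq> 0" by (rule t_nz)
      have "c - 2 * real j / r = 2 - (2 * real j + 1) / real n" using r1 by (simp add: c_def r_def field_simps)
      thus "(P3 + P4) *v t j = (2 - (2 * real j + 1) / real n) *\<^sub>R t j" using t_eig[of j] by (simp add: B_def)
    qed
    thus ?thesis by blast
  next
    case False
    define w where "w = X *v v"
    define m' where "m' = 2 * c - 2 - m"
    have w: "w \<noteq> 0" "B *v w = m' *\<^sub>R w" "Y *v w = 0"
      using False Xeig[OF v(2)] v(3) by (auto simp: w_def m'_def)
    have "m' * (2 - m') * inner w w = 0" using Ynorm[OF w(2)] w(3) by simp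
    hence "m' * (2 - m') = 0" using w(1) by simp
    moreover have "c - m' \<ge> 0" using range[OF w(1) w(2)] by blast
    moreover have "c < 2" using r1 by (simp add: c_def)
    ultimately have m'0: "m' = 0" by auto
    define t where "t j = (R ^^ j) w" for j
    have t_eig: "B *v t j = (2 * real j / r) *\<^sub>R t j" for j
    proof (induction j)
      case 0 then show ?case using w m'0 by (simp add: t_def)
    next
      case (Suc j)
      have "B *v t (Suc j) = B *v R (t j)" by (simp add: t_def)
      also have "\<dots> = (2 * real j / r + 2 / r) *\<^sub>R R (t j)" by (rule Reig[OF Suc])
      also have "2 * real j / r + 2 / r = 2 * real (Suc j) / r" by (simp add: add_divide_distrib)
      finally show ?case by (simp add: t_def)
    qed
    have t_nz: "t j \<noteq> 0" if "j < n" for j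
      using that
    proof (induction j)
      case 0 then show ?case using w by (simp add: t_def)
    next
      case (Suc j)
      hence nz: "t j \<noteq> 0" by simp
      let ?m = "2 * real j / r"
      have jn: "real j + 1 < r" using Suc.prems by (simp add: r_def)
      have f1: "(c - ?m) * (2 - (c - ?m)) > 0"
      proof -
        have "c - ?m = 2 - (2 * real j + 1) / r" using r1 by (simp add: c_def field_simps)
        moreover have "(2 * real j + 1) / r < 2" using jn r1 by (simp add: field_simps)
        moreover have "(2 * real j + 1) / r > 0" using r1 by simp
        ultimately show ?thesis by (metis pos_quad)
      qed
      have f2: "(2*c-2-?m) * (2 - (2*c-2-?m)) > 0"
      proof -
        have "2*c-2-?m = 2 - (2 * real j + 2) / r" using r1 by (simp add: c_def field_simps)
        moreover have "(2 * real j + 2) / r < 2" using jn r1 by (simp add: field_simps)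
        moreover have "(2 * real j + 2) / r > 0" using r1 by simp
        ultimately show ?thesis by (metis pos_quad)
      qed
      have "inner (t (Suc j)) (t (Suc j)) = (2*c-2-?m) * (2 - (2*c-2-?m)) * ((c - ?m) * (2 - (c - ?m)) * inner (t j) (t j))"
        using Rnorm[OF t_eig[of j]] by (simp add: t_def)
      moreover have "inner (t j) (t j) > 0" using nz by (simp add: inner_gt_zero_iff)
      ultimately have "inner (t (Suc j)) (t (Suc j)) > 0" using f1 f2 by simp
      thus ?case by auto
    qed
    have "\<forall>j<n. t j \<noteq> 0 \<and> (P3 + P4) *v t j = (2 * real j / real n) *\<^sub>R t j"
      using t_nz t_eig by (simp add: B_def r_def)
    thus ?thesis by blast
  qed
qed

lemma sum_even: "(\<Sum>k<n. real (2 * k)) = real n * (real n - 1)"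
  by (induction n) (auto simp: algebra_simps)

lemma sum_odd: "(\<Sum>k<n. real (2 * k + 1)) = real n * real n"
  by (induction n) (auto simp: algebra_simps)

lemma sum_reflect: "(\<Sum>k<(n::nat). h (n - 1 - k)) = (\<Sum>k<n. (h k :: real))"
  by (rule sum.reindex_bij_witness[where i="\<lambda>k. n - 1 - k" and j="\<lambda>k. n - 1 - k"]) auto

lemma prod_reflect: "(\<Prod>k<(n::nat). h (n - 1 - k)) = (\<Prod>k<n. (h k :: real))"
  by (rule prod.reindex_bij_witness[where i="\<lambda>k. n - 1 - k" and j="\<lambda>k. n - 1 - k"]) auto

lemma image_reflect: "(\<lambda>k. h (n - 1 - k)) ` {..<n} = h ` {..<(n::nat)}"
proof -
  have "(\<lambda>k. n - 1 - k) ` {..<n} = {..<n}"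
  proof
    show "(\<lambda>k. n - 1 - k) ` {..<n} \<subseteq> {..<n}" by auto
    show "{..<n} \<subseteq> (\<lambda>k. n - 1 - k) ` {..<n}"
    proof
      fix x assume "x \<in> {..<n}"
      hence "x = n - 1 - (n - 1 - x)" "n - 1 - x \<in> {..<n}" by auto
      thus "x \<in> (\<lambda>k. n - 1 - k) ` {..<n}" by (rule image_eqI)
    qed
  qed
  thus ?thesis by (metis image_image)
qed

theorem proposition4p4:
  fixes P1 P2 P3 P4 :: "real^'n^'n" and n :: nat
  assumes n_def: "n = CARD('n)"
    and proj: "orth_proj P1" "orth_proj P2" "orth_proj P3" "orth_proj P4"
    and sum: "P1 + P2 + P3 + P4 = (2 - 1 / real n) *\<^sub>R mat 1"
    and rk1: "int (rank P1) = \<lfloor>real n / 2\<rfloor> - (-1) ^ n"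
    and rk2: "int (rank P2) = \<lfloor>real n / 2\<rfloor>"
    and rk3: "int (rank P3) = \<lfloor>real n / 2\<rfloor>"
    and rk4: "int (rank P4) = \<lfloor>real n / 2\<rfloor>"
    and irr: "irreducible_family {P1, P2, P3, P4}"
  shows "(odd n \<longrightarrow> {c. is_eigenvalue (real n *\<^sub>R (P3 + P4)) c}
                      = {real (2 * k) | k. k < n})
       \<and> (even n \<longrightarrow> {c. is_eigenvalue (real n *\<^sub>R (P3 + P4)) c}
                      = {real (2 * k + 1) | k. k < n})
       \<and> (\<forall>x::real. det (x *\<^sub>R mat 1 - real n *\<^sub>R (P3 + P4))
              = (\<Prod>k<n. x - real (2 * k + (if odd n then 0 else 1))))"
proof -
  have n1: "n \<ge> 1" using n_def by (simp add: Suc_le_eq)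
  have sumAB: "(P1 + P2) + (P3 + P4) = (2 - 1 / real n) *\<^sub>R mat 1" using sum by (simp add: add.assoc)
  define M where "M = real n *\<^sub>R (P3 + P4)"
  have symM: "transpose M = M"
    using proj unfolding M_def orth_proj_def by (simp add: transpose_scalar transpose_add_sub)
  have fl: "\<lfloor>real n / 2\<rfloor> = int (n div 2)" using floor_divide_of_nat_eq[of n 2] by simp
  have r3: "rank P3 = n div 2" using rk3 fl by simp
  have r4: "rank P4 = n div 2" using rk4 fl by simp
  have trM: "trace M = real n * (2 * real (n div 2))"
  proof -
    have "trace M = real n * trace (P3 + P4)" unfolding M_def by (simp add: trace_def sum_distrib_left)
    also have "trace (P3 + P4) = real (rank P3) + real (rank P4)"
      by (simp add: trace_add trace_proj[OF proj(3)] trace_proj[OF proj(4)])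
    finally show ?thesis using r3 r4 by simp
  qed
  have nn: "real n > 0" using n1 by simp
  from spectrum_chains[OF proj sumAB n1] show ?thesis
  proof
    assume "\<exists>u. \<forall>k<n. u k \<noteq> 0 \<and> (P3 + P4) *v u k = (2 * real k / real n) *\<^sub>R u k"
    then obtain u where u: "\<And>k. k < n \<Longrightarrow> u k \<noteq> 0 \<and> (P3 + P4) *v u k = (2 * real k / real n) *\<^sub>R u k"
      by blast
    have ue: "u k \<noteq> 0 \<and> M *v u k = real (2 * k) *\<^sub>R u k" if "k < n" for k
      using u[OF that] nn unfolding M_def by (simp add: scaleR_matrix_vector_assoc[symmetric])
    have inj: "inj_on (\<lambda>k. real (2 * k)) {..<n}" by (auto simp: inj_on_def)
    note AS = assemble[OF n_def symM ue inj]
    have "real n * (2 * real (n div 2)) = real n * (real n - 1)" using AS(1) trM sum_even by simp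
    hence "2 * real (n div 2) = real n - 1" using nn by simp
    hence "2 * (n div 2) + 1 = n" by linarith
    hence odd: "odd n" by presburger
    have set: "{c. is_eigenvalue M c} = {real (2 * k) | k. k < n}" using AS(3) by auto
    show ?thesis using odd set AS(2) unfolding M_def by simp
  next
    assume "\<exists>u. \<forall>k<n. u k \<noteq> 0 \<and> (P3 + P4) *v u k = (2 - (2 * real k + 1) / real n) *\<^sub>R u k"
    then obtain u where u: "\<And>k. k < n \<Longrightarrow> u k \<noteq> 0 \<and> (P3 + P4) *v u k = (2 - (2 * real k + 1) / real n) *\<^sub>R u k"
      by blast
    define h where "h k = real (2 * k + 1)" for k
    have ue: "u k \<noteq> 0 \<and> M *v u k = h (n - 1 - k) *\<^sub>R u k" if "k < n" for k
    proof -
      have "real n * (2 - (2 * real k + 1) / real n) = h (n - 1 - k)"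
        using nn that by (simp add: h_def field_simps of_nat_diff)
      thus ?thesis using u[OF that] unfolding M_def by (simp add: scaleR_matrix_vector_assoc[symmetric])
    qed
    have inj: "inj_on (\<lambda>k. h (n - 1 - k)) {..<n}" by (auto simp: inj_on_def h_def)
    note AS = assemble[OF n_def symM ue inj]
    have "real n * (2 * real (n div 2)) = real n * real n"
      using AS(1) trM sum_reflect[of h n] sum_odd[of n] by (simp add: h_def)
    hence "2 * real (n div 2) = real n" using nn by simp
    hence "2 * (n div 2) = n" by linarith
    hence ev: "even n" by presburger
    have set: "{c. is_eigenvalue M c} = {real (2 * k + 1) | k. k < n}"
      using AS(3) image_reflect[of h n] by (auto simp: h_def)
    have det: "det (x *\<^sub>R mat 1 - M) = (\<Prod>k<n. x - real (2 * k + 1))" for x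
      using AS(2)[of x] prod_reflect[of "\<lambda>k. x - h k" n] by (simp add: h_def)
    show ?thesis using ev set det unfolding M_def by simp
  qed
qed

end
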